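(* If $G$ is any blowup of the Petersen graph, then $\chi(G)\le\lceil\frac54\omega(G)\rceil$.
   Context: A blowup of a graph $H$ is any graph whose vertex set can be partitioned into $|V(H)|$ (not necessarily non-empty) cliques $Q_v$, $v\in V(H)$, such that $Q_u$ is complete to $Q_v$ if $uv\in E(H)$ and there are no edges between $Q_u$ and $Q_v$ if $uv\notin E(H)$. *)

theory Defs
  imports Complex_Main
begin

definition simple_graph :: "'a set \<Rightarrow> ('a \<Rightarrow> 'a \<Rightarrow> bool) \<Rightarrow> bool" where
  "simple_graph V E \<longleftrightarrow> finite V \<and> (\<forall>x y. E x y \<longrightarrow> x \<in> V \<and> y \<in> V)
     \<and> (\<forall>x y. E x y \<longrightarrow> E y x) \<and> (\<forall>x. \<not> E x x)"

definition is_clique :: "('a \<Rightarrow> 'a \<Rightarrow> bool) \<Rightarrow> 'a set \<Rightarrow> bool" where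
  "is_clique E K \<longleftrightarrow> (\<forall>x\<in>K. \<forall>y\<in>K. x \<noteq> y \<longrightarrow> E x y)"

definition clique_number :: "'a set \<Rightarrow> ('a \<Rightarrow> 'a \<Rightarrow> bool) \<Rightarrow> nat" where
  "clique_number V E = Max {card K | K. K \<subseteq> V \<and> is_clique E K}"

definition proper_colouring :: "'a set \<Rightarrow> ('a \<Rightarrow> 'a \<Rightarrow> bool) \<Rightarrow> nat \<Rightarrow> ('a \<Rightarrow> nat) \<Rightarrow> bool" where
  "proper_colouring V E k f \<longleftrightarrow> (\<forall>x\<in>V. f x < k) \<and> (\<forall>x\<in>V. \<forall>y\<in>V. E x y \<longrightarrow> f x \<noteq> f y)"

definition chromatic_number :: "'a set \<Rightarrow> ('a \<Rightarrow> 'a \<Rightarrow> bool) \<Rightarrow> nat" where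
  "chromatic_number V E = (LEAST k. \<exists>f. proper_colouring V E k f)"

definition petersen_vertices :: "nat set set" where
  "petersen_vertices = {S. S \<subseteq> {0..<5} \<and> card S = 2}"

definition petersen_adj :: "nat set \<Rightarrow> nat set \<Rightarrow> bool" where
  "petersen_adj S T \<longleftrightarrow> S \<in> petersen_vertices \<and> T \<in> petersen_vertices \<and> S \<inter> T = {}"

definition is_blowup :: "'a set \<Rightarrow> ('a \<Rightarrow> 'a \<Rightarrow> bool) \<Rightarrow> 'b set \<Rightarrow> ('b \<Rightarrow> 'b \<Rightarrow> bool) \<Rightarrow> bool" where
  "is_blowup V E HV HE \<longleftrightarrow> (\<exists>Q :: 'b \<Rightarrow> 'a set.
      V = (\<Union>v\<in>HV. Q v)
    \<and> (\<forall>u\<in>HV. \<forall>v\<in>HV. u \<noteq> v \<longrightarrow> Q u \<inter> Q v = {})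
    \<and> (\<forall>v\<in>HV. is_clique E (Q v))
    \<and> (\<forall>u\<in>HV. \<forall>v\<in>HV. u \<noteq> v \<longrightarrow> (\<forall>x\<in>Q u. \<forall>y\<in>Q v. E x y \<longleftrightarrow> HE u v)))"

end

theory Submission
  imports Defs
begin

abbreviation PV where "PV \<equiv> petersen_vertices"

definition bnd :: "nat \<Rightarrow> (nat set \<Rightarrow> nat) \<Rightarrow> bool" where
  "bnd w n \<longleftrightarrow> (\<forall>S\<in>PV. n S \<le> w) \<and> (\<forall>S\<in>PV. \<forall>T\<in>PV. S \<inter> T = {} \<longrightarrow> n S + n T \<le> w)"

definition wcol :: "nat \<Rightarrow> (nat set \<Rightarrow> nat) \<Rightarrow> bool" where
  "wcol k n \<longleftrightarrow> (\<exists>C. (\<forall>S\<in>PV. C S \<subseteq> {..<k} \<and> n S \<le> card (C S))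
        \<and> (\<forall>S\<in>PV. \<forall>T\<in>PV. S \<inter> T = {} \<longrightarrow> C S \<inter> C T = {}))"

definition nb :: "nat set \<Rightarrow> nat set set" where
  "nb S = {T\<in>PV. S \<inter> T = {}}"

definition ff :: "nat \<Rightarrow> nat" where "ff w = (5*w+3) div 4"

lemma finite_PV: "finite PV"
proof -
  have "PV \<subseteq> Pow {0..<5}" by (auto simp: petersen_vertices_def)
  thus ?thesis by (rule finite_subset) simp
qed

lemma PV_D: "S \<in> PV \<Longrightarrow> S \<subseteq> {0..<5} \<and> card S = 2 \<and> finite S \<and> S \<noteq> {}"
  unfolding petersen_vertices_def by (auto intro: finite_subset)

lemma nb_card: assumes "S \<in> PV" shows "card (nb S) = 3"
proof -
  have "nb S = {T. T \<subseteq> {0..<5} - S \<and> card T = 2}"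
    unfolding nb_def petersen_vertices_def by auto
  moreover have "card ({0..<5::nat} - S) = 3"
    using PV_D[OF assms] by (simp add: card_Diff_subset)
  moreover have "(3::nat) choose 2 = 3" by (simp add: choose_two)
  ultimately show ?thesis by (simp add: n_subsets)
qed

lemma nb_sum: fixes n :: "nat set \<Rightarrow> nat" assumes "S \<in> PV" "\<forall>T\<in>nb S. n T \<le> b" shows "(\<Sum>T\<in>nb S. n T) \<le> 3*b"
proof -
  have "(\<Sum>T\<in>nb S. n T) \<le> (\<Sum>T\<in>nb S. b)" by (rule sum_mono) (use assms(2) in auto)
  thus ?thesis using nb_card[OF assms(1)] by simp
qed

lemma wcol_exact:
  assumes "wcol k n"
  obtains C where "\<forall>S\<in>PV. C S \<subseteq> {..<k} \<and> card (C S) = n S"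
    "\<forall>S\<in>PV. \<forall>T\<in>PV. S \<inter> T = {} \<longrightarrow> C S \<inter> C T = {}"
proof -
  obtain C where C1: "\<forall>S\<in>PV. C S \<subseteq> {..<k} \<and> n S \<le> card (C S)"
    and C2: "\<forall>S\<in>PV. \<forall>T\<in>PV. S \<inter> T = {} \<longrightarrow> C S \<inter> C T = {}"
    using assms unfolding wcol_def by blast
  define D where "D S = (SOME X. X \<subseteq> C S \<and> card X = n S)" for S
  have D: "D S \<subseteq> C S \<and> card (D S) = n S" if "S \<in> PV" for S
    unfolding D_def
  proof (rule someI_ex)
    show "\<exists>X. X \<subseteq> C S \<and> card X = n S"
      using C1 that obtain_subset_with_card_n by metis
  qed
  show ?thesis
  proof (rule that[of D])
    show "\<forall>S\<in>PV. D S \<subseteq> {..<k} \<and> card (D S) = n S" using C1 D by blast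
    show "\<forall>S\<in>PV. \<forall>T\<in>PV. S \<inter> T = {} \<longrightarrow> D S \<inter> D T = {}"
    proof (intro ballI impI)
      fix S T assume "S \<in> PV" "T \<in> PV" "S \<inter> T = {}"
      thus "D S \<inter> D T = {}" using C2 D[of S] D[of T] by blast
    qed
  qed
qed

lemma R1:
  assumes S0: "S0 \<in> PV" and c: "wcol k (n(S0:=0))"
    and le: "n S0 + (\<Sum>T\<in>nb S0. n T) \<le> k"
  shows "wcol k n"
proof -
  obtain C where C1: "\<forall>S\<in>PV. C S \<subseteq> {..<k} \<and> card (C S) = (n(S0:=0)) S"
    and C2: "\<forall>S\<in>PV. \<forall>T\<in>PV. S \<inter> T = {} \<longrightarrow> C S \<inter> C T = {}"
    using wcol_exact[OF c] by blast
  define U where "U = (\<Union>T\<in>nb S0. C T)"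
  have fin: "finite (nb S0)" using finite_PV unfolding nb_def by auto
  have nbS0: "T \<in> nb S0 \<Longrightarrow> T \<in> PV \<and> T \<noteq> S0 \<and> S0 \<inter> T = {}" for T
    using PV_D[OF S0] unfolding nb_def by auto
  have "card U \<le> (\<Sum>T\<in>nb S0. card (C T))" unfolding U_def by (rule card_UN_le[OF fin])
  also have "\<dots> = (\<Sum>T\<in>nb S0. n T)"
    by (rule sum.cong) (use C1 nbS0 in auto)
  finally have cU: "card U \<le> (\<Sum>T\<in>nb S0. n T)" .
  have Usub: "U \<subseteq> {..<k}" unfolding U_def using C1 nbS0 by blast
  hence finU: "finite U" by (rule finite_subset) simp
  have "card {..<k} - card U \<le> card ({..<k} - U)" by (rule diff_card_le_card_Diff[OF finU])
  hence "n S0 \<le> card ({..<k} - U)" using cU le by simp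
  then obtain D where D: "D \<subseteq> {..<k} - U" "card D = n S0"
    using obtain_subset_with_card_n by metis
  show ?thesis unfolding wcol_def
  proof (intro exI[of _ "C(S0:=D)"] conjI ballI impI)
    fix S assume S: "S \<in> PV"
    show "(C(S0 := D)) S \<subseteq> {..<k}" using C1 S D by auto
    show "n S \<le> card ((C(S0 := D)) S)" using C1 S D by auto
  next
    fix S T assume S: "S \<in> PV" and T: "T \<in> PV" and ST: "S \<inter> T = {}"
    have "S0 \<inter> S0 \<noteq> {}" using PV_D[OF S0] by auto
    show "(C(S0 := D)) S \<inter> (C(S0 := D)) T = {}"
    proof (cases "S = S0")
      case True
      hence "T \<in> nb S0" using T ST unfolding nb_def by auto
      hence "C T \<subseteq> U" unfolding U_def by blast
      moreover have "T \<noteq> S0" using \<open>S0 \<inter> S0 \<noteq> {}\<close> True ST by auto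
      ultimately show ?thesis using True D by auto
    next
      case False
      show ?thesis
      proof (cases "T = S0")
        case True
        hence "S \<in> nb S0" using S ST unfolding nb_def by auto
        hence "C S \<subseteq> U" unfolding U_def by blast
        thus ?thesis using True False D by auto
      next
        case False2: False
        thus ?thesis using False C2 S T ST by auto
      qed
    qed
  qed
qed

lemma R2:
  assumes c: "wcol k (\<lambda>S. n S - 2)"
  shows "wcol (k+5) n"
proof -
  obtain C where C1: "\<forall>S\<in>PV. C S \<subseteq> {..<k} \<and> n S - 2 \<le> card (C S)"
    and C2: "\<forall>S\<in>PV. \<forall>T\<in>PV. S \<inter> T = {} \<longrightarrow> C S \<inter> C T = {}"
    using c unfolding wcol_def by blast
  show ?thesis unfolding wcol_def
  proof (intro exI[of _ "\<lambda>S. C S \<union> (\<lambda>i. k+i) ` S"] conjI ballI impI)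
    fix S assume S: "S \<in> PV"
    note P = PV_D[OF S]
    have "C S \<subseteq> {..<k}" using C1 S by blast
    thus "C S \<union> (\<lambda>i. k+i) ` S \<subseteq> {..<k+5}" using P by auto
    have finC: "finite (C S)" using C1 S finite_subset by blast
    have e1: "card (C S \<union> (\<lambda>i. k+i) ` S) = card (C S) + card ((\<lambda>i. k+i) ` S)"
      by (rule card_Un_disjoint) (use finC P C1 S in auto)
    have e2: "card ((\<lambda>i. k+i) ` S) = 2" using P by (simp add: card_image)
    have e3: "n S - 2 \<le> card (C S)" using C1 S by blast
    show "n S \<le> card (C S \<union> (\<lambda>i. k+i) ` S)" unfolding e1 e2 using e3 by linarith
  next
    fix S T assume S: "S \<in> PV" and T: "T \<in> PV" and ST: "S \<inter> T = {}"
    show "(C S \<union> (\<lambda>i. k+i) ` S) \<inter> (C T \<union> (\<lambda>i. k+i) ` T) = {}"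
    proof -
      have a: "C S \<inter> C T = {}" using C2 S T ST by blast
      have b: "C S \<subseteq> {..<k}" "C T \<subseteq> {..<k}" using C1 S T by blast+
      have c: "(\<lambda>i. k+i) ` S \<inter> (\<lambda>i. k+i) ` T = {}" using ST by auto
      show ?thesis using a b c by auto
    qed
  qed
qed


definition c3 :: "nat set \<Rightarrow> nat" where "c3 S = min (Min S) 2"

lemma c3_le: "c3 S \<le> 2" unfolding c3_def by simp

lemma c3_prop:
  assumes S: "S \<in> PV" and T: "T \<in> PV" and ST: "S \<inter> T = {}"
  shows "c3 S \<noteq> c3 T"
proof
  assume eq: "c3 S = c3 T"
  note PS = PV_D[OF S] and PT = PV_D[OF T]
  have mS: "Min S \<in> S" using PS by simp
  have mT: "Min T \<in> T" using PT by simp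
  show False
  proof (cases "Min S < 2")
    case True
    hence "Min T = Min S" using eq unfolding c3_def by (auto simp: min_def split: if_splits)
    thus False using mS mT ST by auto
  next
    case False
    hence "Min T \<ge> 2" using eq unfolding c3_def by (auto simp: min_def split: if_splits)
    hence sT: "T \<subseteq> {2..<5}" using PT Min_le[of T] by fastforce
    have sS: "S \<subseteq> {2..<5}" using False PS Min_le[of S] by fastforce
    have "card (S \<union> T) = 4" using PS PT ST by (simp add: card_Un_disjoint)
    moreover have "card (S \<union> T) \<le> card {2..<5::nat}" using sS sT by (intro card_mono) auto
    ultimately show False by simp
  qed
qed

lemma B3: assumes "\<forall>S\<in>PV. n S \<le> 1" shows "wcol 3 n"
  unfolding wcol_def
proof (intro exI[of _ "\<lambda>S. {c3 S}"] conjI ballI impI)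
  fix S assume "S \<in> PV"
  thus "{c3 S} \<subseteq> {..<3}" "n S \<le> card {c3 S}" using assms c3_le[of S] by auto
next
  fix S T assume "S \<in> PV" "T \<in> PV" "S \<inter> T = {}"
  thus "{c3 S} \<inter> {c3 T} = {}" using c3_prop by auto
qed

lemma B4: assumes "\<forall>S\<in>PV. n S \<le> 2" "bnd 3 n" shows "wcol 4 n"
  unfolding wcol_def
proof (intro exI[of _ "\<lambda>S. {c3 S} \<union> (if n S = 2 then {3} else {})"] conjI ballI impI)
  fix S assume "S \<in> PV"
  thus "{c3 S} \<union> (if n S = 2 then {3} else {}) \<subseteq> {..<4}"
    "n S \<le> card ({c3 S} \<union> (if n S = 2 then {3} else {}))" using assms c3_le[of S] by auto
next
  fix S T assume S: "S \<in> PV" and T: "T \<in> PV" and ST: "S \<inter> T = {}"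
  have "c3 S \<noteq> c3 T" using c3_prop S T ST by auto
  moreover have "\<not> (n S = 2 \<and> n T = 2)" using assms(2) S T ST unfolding bnd_def by fastforce
  ultimately show "({c3 S} \<union> (if n S = 2 then {3} else {})) \<inter> ({c3 T} \<union> (if n T = 2 then {3} else {})) = {}"
    using c3_le[of S] c3_le[of T] by auto
qed

lemma B5:
  assumes S0: "{i,j} \<in> PV" and n0: "n {i,j} = 3" and b: "bnd 4 n" and le3: "\<forall>S\<in>PV. n S \<le> 3"
  shows "wcol 5 n"
proof -
  define C where "C S = {c3 S} \<union> (if n S = 3 \<or> (n S = 2 \<and> i \<in> S) then {3} else {})
      \<union> (if n S = 3 \<or> (n S = 2 \<and> i \<notin> S) then {4} else {})" for S
  have meet: "j \<in> S" if "S \<in> PV" "n S = 2" "i \<notin> S" for S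
  proof (rule ccontr)
    assume "j \<notin> S"
    hence "S \<inter> {i,j} = {}" using that by auto
    hence "n S + n {i,j} \<le> 4" using b that S0 unfolding bnd_def by blast
    thus False using that n0 by simp
  qed
  show ?thesis unfolding wcol_def
  proof (intro exI[of _ C] conjI ballI impI)
    fix S assume S: "S \<in> PV"
    show "C S \<subseteq> {..<5}" unfolding C_def using c3_le[of S] by auto
    show "n S \<le> card (C S)" unfolding C_def using c3_le[of S] le3 S
      by (auto simp: card_insert_if)
  next
    fix S T assume S: "S \<in> PV" and T: "T \<in> PV" and ST: "S \<inter> T = {}"
    have "c3 S \<noteq> c3 T" using c3_prop S T ST by auto
    moreover have sum: "n S + n T \<le> 4" using b S T ST unfolding bnd_def by blast
    moreover have "\<not> (n S = 2 \<and> n T = 2 \<and> i \<in> S \<and> i \<in> T)" using ST by auto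
    moreover have "\<not> (n S = 2 \<and> n T = 2 \<and> i \<notin> S \<and> i \<notin> T)" using ST meet[OF S] meet[OF T] by auto
    ultimately show "C S \<inter> C T = {}" unfolding C_def using c3_le[of S] c3_le[of T] by auto
  qed
qed


lemma ff_step: "4 \<le> w \<Longrightarrow> ff (w - 4) + 5 = ff w" unfolding ff_def by arith

lemma ff_big: "4 \<le> w \<Longrightarrow> m \<le> w \<Longrightarrow> w < m + 2 \<Longrightarrow> ff w < m + 3*(w-m) \<Longrightarrow> w = 4 \<and> m = 3"
  unfolding ff_def by arith

lemma main: "bnd w n \<Longrightarrow> wcol (ff w) n"
proof (induction "\<Sum>S\<in>PV. n S" arbitrary: n w rule: less_induct)
  case less
  note bd = less.prems
  have bd1: "\<And>S. S \<in> PV \<Longrightarrow> n S \<le> w" and bd2: "\<And>S T. S \<in> PV \<Longrightarrow> T \<in> PV \<Longrightarrow> S \<inter> T = {} \<Longrightarrow> n S + n T \<le> w"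
    using bd unfolding bnd_def by blast+
  show ?case
  proof (cases "\<forall>S\<in>PV. n S = 0")
    case True
    show ?thesis unfolding wcol_def using True by (intro exI[of _ "\<lambda>_. {}"]) auto
  next
    case False
    then obtain S1 where S1: "S1 \<in> PV" "0 < n S1" by auto
    show ?thesis
    proof (cases "\<exists>S0\<in>PV. 0 < n S0 \<and> n S0 + (\<Sum>T\<in>nb S0. n T) \<le> ff w")
      case True
      then obtain S0 where S0: "S0 \<in> PV" "0 < n S0" "n S0 + (\<Sum>T\<in>nb S0. n T) \<le> ff w" by blast
      have lt: "(\<Sum>S\<in>PV. (n(S0:=0)) S) < (\<Sum>S\<in>PV. n S)"
        by (rule sum_strict_mono_ex1[OF finite_PV]) (use S0 in auto)
      have "bnd w (n(S0:=0))" unfolding bnd_def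
      proof (intro conjI ballI impI)
        fix S assume "S \<in> PV" thus "(n(S0:=0)) S \<le> w" using bd1 by auto
      next
        fix S T assume "S \<in> PV" "T \<in> PV" "S \<inter> T = {}"
        thus "(n(S0:=0)) S + (n(S0:=0)) T \<le> w" using bd1 bd2[of S T] by auto
      qed
      hence "wcol (ff w) (n(S0:=0))" using less.hyps[OF lt] by blast
      thus ?thesis using R1 S0 by blast
    next
      case notR1: False
      show ?thesis
      proof (cases "4 \<le> w \<and> (\<forall>S\<in>PV. n S + 2 \<le> w)")
        case True
        have lt: "(\<Sum>S\<in>PV. n S - 2) < (\<Sum>S\<in>PV. n S)"
          by (rule sum_strict_mono_ex1[OF finite_PV]) (use S1 in \<open>auto intro!: bexI[of _ S1]\<close>)
        have "bnd (w-4) (\<lambda>S. n S - 2)" unfolding bnd_def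
        proof (intro conjI ballI impI)
          fix S assume "S \<in> PV" thus "n S - 2 \<le> w - 4" using True by auto
        next
          fix S T assume "S \<in> PV" "T \<in> PV" "S \<inter> T = {}"
          moreover have "n S + 2 \<le> w" "n T + 2 \<le> w" using True \<open>S \<in> PV\<close> \<open>T \<in> PV\<close> by auto
          ultimately show "n S - 2 + (n T - 2) \<le> w - 4" using bd2[of S T] by linarith
        qed
        hence "wcol (ff (w-4)) (\<lambda>S. n S - 2)" using less.hyps[OF lt] by blast
        hence "wcol (ff (w-4) + 5) n" by (rule R2)
        thus ?thesis using ff_step True by simp
      next
        case notR2: False
        have key: "ff w < n S + 3*(w - n S)" if S: "S \<in> PV" "0 < n S" for S
        proof -
          have "\<forall>T\<in>nb S. n T \<le> w - n S" using bd2[of S] S unfolding nb_def by fastforce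
          hence "(\<Sum>T\<in>nb S. n T) \<le> 3*(w - n S)" using nb_sum S by blast
          thus ?thesis using notR1 S by fastforce
        qed
        show ?thesis
        proof (cases "4 \<le> w")
          case True
          then obtain S where S: "S \<in> PV" "w < n S + 2" using notR2 by auto
          have "w = 4 \<and> n S = 3" using ff_big[OF True bd1[OF S(1)] S(2)] key[OF S(1)] S True by simp
          hence w4: "w = 4" and nS: "n S = 3" by auto
          have le3: "\<forall>T\<in>PV. n T \<le> 3"
          proof
            fix T assume T: "T \<in> PV"
            show "n T \<le> 3"
            proof (rule ccontr)
              assume "\<not> n T \<le> 3"
              hence "n T = 4" using bd1[OF T] w4 by simp
              thus False using key[OF T] w4 by (simp add: ff_def)
            qed
          qed
          obtain i j where ij: "S = {i,j}" using PV_D[OF S(1)] card_2_iff[of S] by auto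
          have "wcol 5 n" using B5[of i j n] ij S nS bd w4 le3 by simp
          thus ?thesis using w4 by (simp add: ff_def)
        next
          case False
          hence "w = 0 \<or> w = 1 \<or> w = 2 \<or> w = 3" by arith
          thus ?thesis
          proof (elim disjE)
            assume "w = 0" thus ?thesis using bd1[OF S1(1)] S1 by simp
          next
            assume w: "w = 1"
            thus ?thesis using key[OF S1(1)] bd1[OF S1(1)] S1 by (simp add: ff_def)
          next
            assume w: "w = 2"
            have "\<forall>T\<in>PV. n T \<le> 1"
            proof
              fix T assume T: "T \<in> PV"
              show "n T \<le> 1"
              proof (rule ccontr)
                assume "\<not> n T \<le> 1"
                hence "n T = 2" using bd1[OF T] w by simp
                thus False using key[OF T] w by (simp add: ff_def)
              qed
            qed
            thus ?thesis using B3 w by (simp add: ff_def)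
          next
            assume w: "w = 3"
            have "\<forall>T\<in>PV. n T \<le> 2"
            proof
              fix T assume T: "T \<in> PV"
              show "n T \<le> 2"
              proof (rule ccontr)
                assume "\<not> n T \<le> 2"
                hence "n T = 3" using bd1[OF T] w by simp
                thus False using key[OF T] w by (simp add: ff_def)
              qed
            qed
            thus ?thesis using B4 w bd by (simp add: ff_def)
          qed
        qed
      qed
    qed
  qed
qed


lemma ceil_bound: "int (ff m) \<le> \<lceil>(5/4) * real m\<rceil>"
proof -
  have "ff m * 4 \<le> 5*m + 3" unfolding ff_def by (rule div_times_less_eq_dividend)
  hence "real (ff m * 4) \<le> real (5*m+3)" by (simp only: of_nat_le_iff)
  hence "real (ff m) * 4 \<le> 5 * real m + 3" by simp
  hence "real_of_int (int (ff m)) - 1 < (5/4) * real m" by simp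
  thus ?thesis by (subst le_ceiling_iff) simp
qed

theorem theorem5p3:
  fixes V :: "'a set" and E :: "'a \<Rightarrow> 'a \<Rightarrow> bool"
  assumes "simple_graph V E"
    and "is_blowup V E petersen_vertices petersen_adj"
  shows "int (chromatic_number V E) \<le> \<lceil>(5/4) * real (clique_number V E)\<rceil>"
proof -
  obtain Q :: "nat set \<Rightarrow> 'a set" where
    QV: "V = (\<Union>v\<in>PV. Q v)"
    and Qd: "\<forall>u\<in>PV. \<forall>v\<in>PV. u \<noteq> v \<longrightarrow> Q u \<inter> Q v = {}"
    and Qc: "\<forall>v\<in>PV. is_clique E (Q v)"
    and Qx: "\<forall>u\<in>PV. \<forall>v\<in>PV. u \<noteq> v \<longrightarrow> (\<forall>x\<in>Q u. \<forall>y\<in>Q v. E x y \<longleftrightarrow> petersen_adj u v)"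
    using assms(2) unfolding is_blowup_def by (elim exE conjE) (rule that)
  have finV: "finite V" and irr: "\<And>x. \<not> E x x" using assms(1) unfolding simple_graph_def by auto
  define om where "om = clique_number V E"
  have finK: "finite {card K | K. K \<subseteq> V \<and> is_clique E K}"
  proof (rule finite_subset)
    show "{card K | K. K \<subseteq> V \<and> is_clique E K} \<subseteq> card ` Pow V" by auto
    show "finite (card ` Pow V)" using finV by simp
  qed
  have cl: "card K \<le> om" if "K \<subseteq> V" "is_clique E K" for K
    unfolding om_def clique_number_def by (rule Max_ge[OF finK]) (use that in auto)
  have QsubV: "S \<in> PV \<Longrightarrow> Q S \<subseteq> V" for S using QV by auto
  have finQ: "finite (Q S)" if "S \<in> PV" for S using finite_subset[OF QsubV[OF that] finV] .
  define n where "n S = card (Q S)" for S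
  have bd: "bnd om n" unfolding bnd_def
  proof (intro conjI ballI impI)
    fix S assume S: "S \<in> PV" show "n S \<le> om" unfolding n_def using cl[OF QsubV[OF S]] Qc S by simp
  next
    fix S T assume S: "S \<in> PV" and T: "T \<in> PV" and ST: "S \<inter> T = {}"
    have neq: "S \<noteq> T" using ST PV_D[OF S] by auto
    have adj: "petersen_adj S T" "petersen_adj T S" using S T ST unfolding petersen_adj_def by auto
    have "is_clique E (Q S \<union> Q T)" unfolding is_clique_def
    proof (intro ballI impI)
      fix x y assume x: "x \<in> Q S \<union> Q T" and y: "y \<in> Q S \<union> Q T" and xy: "x \<noteq> y"
      show "E x y"
      proof -
        { assume "x \<in> Q S" "y \<in> Q S" hence ?thesis using Qc S xy unfolding is_clique_def by blast }
        moreover { assume "x \<in> Q T" "y \<in> Q T" hence ?thesis using Qc T xy unfolding is_clique_def by blast }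
        moreover { assume "x \<in> Q S" "y \<in> Q T" hence ?thesis using Qx S T neq adj by blast }
        moreover { assume "x \<in> Q T" "y \<in> Q S" hence ?thesis using Qx S T neq adj by blast }
        ultimately show ?thesis using x y by blast
      qed
    qed
    moreover have "Q S \<union> Q T \<subseteq> V" using QsubV S T by auto
    ultimately have "card (Q S \<union> Q T) \<le> om" by (rule cl[rotated])
    moreover have "card (Q S \<union> Q T) = n S + n T" unfolding n_def
      by (rule card_Un_disjoint) (use finQ S T Qd neq in auto)
    ultimately show "n S + n T \<le> om" by simp
  qed
  obtain C where C1: "\<forall>S\<in>PV. C S \<subseteq> {..<ff om} \<and> card (C S) = n S"
    and C2: "\<forall>S\<in>PV. \<forall>T\<in>PV. S \<inter> T = {} \<longrightarrow> C S \<inter> C T = {}"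
    using wcol_exact[OF main[OF bd]] by blast
  define h where "h S = (SOME g. bij_betw g (Q S) (C S))" for S
  have hb: "bij_betw (h S) (Q S) (C S)" if S: "S \<in> PV" for S
  proof -
    have sub: "C S \<subseteq> {..<ff om}" and cc: "card (C S) = n S" using C1 S by auto
    have "finite (C S)" using finite_subset[OF sub] by simp
    moreover have "card (Q S) = card (C S)" using cc n_def by simp
    ultimately have ex: "\<exists>g. bij_betw g (Q S) (C S)" using finite_same_card_bij[OF finQ[OF S]] by blast
    show ?thesis unfolding h_def by (rule someI_ex[OF ex])
  qed
  define p where "p x = (SOME S. S \<in> PV \<and> x \<in> Q S)" for x
  have p1: "p x \<in> PV \<and> x \<in> Q (p x)" if "x \<in> V" for x
  proof -
    have ex: "\<exists>S. S \<in> PV \<and> x \<in> Q S" using that QV by blast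
    show ?thesis unfolding p_def by (rule someI_ex[OF ex])
  qed
  have p2: "p x = S" if "S \<in> PV" "x \<in> Q S" for x S
  proof (rule ccontr)
    assume ne: "p x \<noteq> S"
    have xV: "x \<in> V" using QsubV[OF that(1)] that(2) by blast
    have "Q (p x) \<inter> Q S = {}" using Qd p1[OF xV] that(1) ne by blast
    thus False using p1[OF xV] that(2) by blast
  qed
  define col where "col x = h (p x) x" for x
  have colC: "col x \<in> C (p x)" if "x \<in> V" for x
    unfolding col_def using bij_betw_apply[OF hb[of "p x"]] p1[OF that] by blast
  have pc: "proper_colouring V E (ff om) col" unfolding proper_colouring_def
  proof (intro conjI ballI impI)
    fix x assume x: "x \<in> V"
    have "C (p x) \<subseteq> {..<ff om}" using C1 p1[OF x] by blast
    thus "col x < ff om" using colC[OF x] by auto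
  next
    fix x y assume x: "x \<in> V" and y: "y \<in> V" and e: "E x y"
    show "col x \<noteq> col y"
    proof (cases "p x = p y")
      case True
      have "x \<noteq> y" using e irr by auto
      moreover have "inj_on (h (p x)) (Q (p x))" using hb p1[OF x] bij_betw_def by blast
      ultimately show ?thesis unfolding col_def using True p1[OF x] p1[OF y] inj_onD by fastforce
    next
      case False
      have "petersen_adj (p x) (p y)" using Qx p1[OF x] p1[OF y] False e by blast
      hence "p x \<inter> p y = {}" unfolding petersen_adj_def by blast
      hence "C (p x) \<inter> C (p y) = {}" using C2 p1[OF x] p1[OF y] by blast
      thus ?thesis using colC[OF x] colC[OF y] by auto
    qed
  qed
  have "chromatic_number V E \<le> ff om" unfolding chromatic_number_def
    by (rule Least_le) (use pc in blast)
  hence "int (chromatic_number V E) \<le> int (ff om)" by simp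
  also have "\<dots> \<le> \<lceil>(5/4) * real om\<rceil>" by (rule ceil_bound)
  finally show ?thesis unfolding om_def .
qed

end
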